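(* Inside the quotient field $Q(\mathbb{Z}[q]^{\mathbb{N}})$ one has $$\mathbb{Z}[q]^{\mathbb{N}}\cap\mathbb{Z}[q,q^{-1}][\Phi_{\mathbb{N}}^{-1}]=\mathbb{Z}[q,q^{-1}].$$
   Context: $q$ is an indeterminate, $\Phi_n(q)$ the $n$th cyclotomic polynomial, and $\Phi_{\mathbb{N}}^*$ the multiplicative subset of $\mathbb{Z}[q]$ generated by all $\Phi_n(q)$, $n\in\mathbb{N}$. $\mathbb{Z}[q]^{\mathbb{N}}=\varprojlim_{f\in\Phi_{\mathbb{N}}^*}\mathbb{Z}[q]/(f)$; it is an integral domain in which $q$ is invertible, and the natural map $\mathbb{Z}[q,q^{-1}]\to\mathbb{Z}[q]^{\mathbb{N}}$ is injective, so $\mathbb{Q}(q)\subset Q(\mathbb{Z}[q]^{\mathbb{N}})$, where $Q(\cdot)$ denotes the quotient field. $\mathbb{Z}[q,q^{-1}][\Phi_{\mathbb{N}}^{-1}]$ is the subring of $\mathbb{Q}(q)$ of fractions $f/g$ with $f\in\mathbb{Z}[q,q^{-1}]$, $g\in\Phi_{\mathbb{N}}^*$. *)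

theory Defs
  imports Complex_Main "HOL-Computational_Algebra.Polynomial" "HOL-Library.Multiset"
begin

definition cyclo_complex :: "nat \<Rightarrow> complex poly" where
  "cyclo_complex n = (\<Prod>k\<in>{k. k < n \<and> coprime k n}. [:- cis (2 * pi * real k / real n), 1:])"

definition cyclotomic :: "nat \<Rightarrow> int poly" where
  "cyclotomic n = (THE p. map_poly of_int p = cyclo_complex n)"

definition Phi_star :: "int poly set" where
  "Phi_star = {prod_mset (image_mset cyclotomic M) | M. \<forall>n\<in>#M. 0 < n}"

text \<open>Elements of Z[q]^N = lim_{f in Phi_star} Z[q]/(f), represented as families of
  representatives x f of residues mod f, compatible along divisibility.\<close>
definition habiro_elems :: "(int poly \<Rightarrow> int poly) set" where
  "habiro_elems = {x. \<forall>f\<in>Phi_star. \<forall>g\<in>Phi_star. f dvd g \<longrightarrow> f dvd (x g - x f)}"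

abbreviation qpow :: "nat \<Rightarrow> int poly" where
  "qpow k \<equiv> monom 1 k"

end

theory Submission
  imports Defs "HOL-Computational_Algebra.Fundamental_Theorem_Algebra"
begin


abbreviation ip :: "int poly \<Rightarrow> complex poly" where "ip p \<equiv> map_poly of_int p"

lemma ip_add: "ip (p + q) = ip p + ip q"
  by (rule poly_eqI) (simp add: coeff_map_poly)
lemma ip_diff: "ip (p - q) = ip p - ip q"
  by (rule poly_eqI) (simp add: coeff_map_poly)
lemma ip_1: "ip 1 = 1" by simp
lemma ip_monom: "ip (monom 1 n) = monom 1 n"
  by (simp add: map_poly_monom)
lemma ip_smult: "ip (smult c p) = smult (of_int c) (ip p)"
  by (rule poly_eqI) (simp add: coeff_map_poly)
lemma ip_mult: "ip (p * q) = ip p * ip q"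
proof (induction p)
  case 0 then show ?case by simp
next
  case (pCons a p)
  then show ?case by (simp add: map_poly_pCons ip_add ip_smult algebra_simps)
qed
lemma ip_prod: "ip (prod f A) = (\<Prod>x\<in>A. ip (f x))"
  by (induction A rule: infinite_finite_induct) (auto simp: ip_mult)
lemma ip_inj: "ip p = ip q \<Longrightarrow> p = q"
proof (rule poly_eqI)
  fix n assume "ip p = ip q"
  then have "coeff (ip p) n = coeff (ip q) n" by simp
  then show "coeff p n = coeff q n" by (simp add: coeff_map_poly)
qed
lemma ip_degree: "degree (ip p) = degree p"
  by (rule degree_map_poly) simp
lemma ip_lead: "lead_coeff (ip p) = of_int (lead_coeff p)"
  by (simp add: ip_degree coeff_map_poly)

lemma monic_div:
  assumes "lead_coeff q = 1" and "ip p = ip q * r"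
  shows "\<exists>s. r = ip s"
proof -
  have q0: "q \<noteq> 0" using assms(1) by auto
  obtain s t where st: "pseudo_divmod p q = (s, t)" by fastforce
  have e: "p = q * s + t" using pseudo_divmod(1)[OF q0 st] assms(1) by simp
  have dt: "t = 0 \<or> degree t < degree q" using pseudo_divmod(2)[OF q0 st] .
  have iq1: "ip q * (r - ip s) = ip t"
    using assms(2) e by (simp add: ip_add ip_mult algebra_simps)
  have iq2: "ip q \<noteq> 0"
  proof
    assume "ip q = 0"
    then have "lead_coeff (ip q) = 0" by simp
    with ip_lead[of q] assms(1) show False by simp
  qed
  have "r = ip s"
  proof (rule ccontr)
    assume ne: "r \<noteq> ip s"
    then have rs: "r - ip s \<noteq> 0" by simp
    then have "ip t \<noteq> 0" using iq1 iq2 by (metis no_zero_divisors)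
    then have t0: "t \<noteq> 0" by auto
    have "degree (ip t) = degree q + degree (r - ip s)"
      using degree_mult_eq[OF iq2 rs] iq1 by (simp add: ip_degree)
    then have "degree t \<ge> degree q" by (simp add: ip_degree)
    with dt t0 show False by simp
  qed
  then show ?thesis by blast
qed


lemma xn_factor:
  assumes n: "n > 0"
  shows "(monom 1 n - 1 :: complex poly) = (\<Prod>k<n. [:- cis (2 * pi * real k / real n), 1:])"
proof -
  define p :: "complex poly" where "p = monom 1 n - 1"
  have "degree (monom 1 n + (- 1 :: complex poly)) = n"
    using n by (subst degree_add_eq_left) (simp_all add: degree_monom_eq)
  then have deg: "degree p = n" unfolding p_def by simp
  have lc: "lead_coeff p = 1" using deg n unfolding p_def
    by (simp add: coeff_monom)
  have roots: "{z. poly p z = 0} = {z. z ^ n = 1}"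
    by (simp add: p_def poly_monom)
  have "rsquarefree p"
    unfolding rsquarefree_roots
  proof (intro allI notI)
    fix a assume "poly p a = 0 \<and> poly (pderiv p) a = 0"
    then have "a ^ n = 1" "of_nat n * a ^ (n - 1) = 0"
      by (auto simp: p_def pderiv_diff pderiv_monom poly_monom)
    moreover have "a \<noteq> 0" using \<open>a ^ n = 1\<close> n by (metis power_0_left zero_neq_one neq0_conv)
    ultimately show False using n by simp
  qed
  then have "p = smult (lead_coeff p) (\<Prod>z|poly p z = 0. [:-z, 1:])"
    by (simp add: complex_poly_decompose_rsquarefree)
  also have "\<dots> = (\<Prod>z\<in>{z. z ^ n = 1}. [:-z, 1:])" using lc roots by simp
  also have "\<dots> = (\<Prod>k<n. [:- cis (2 * pi * real k / real n), 1:])"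
    using prod.reindex_bij_betw[OF bij_betw_roots_unity[OF n], of "\<lambda>z. [:-z, 1:]"] by simp
  finally show ?thesis by (simp add: p_def)
qed



lemma regroup:
  assumes n: "n > (0::nat)"
  shows "(\<Prod>k<n. [:- cis (2 * pi * real k / real n), 1:]) = (\<Prod>d\<in>{d. d dvd n}. cyclo_complex d)"
proof -
  define S where "S = Sigma {d. d dvd n} (\<lambda>d. {k. k < d \<and> coprime k d})"
  have fin: "finite {d. d dvd n}" using n by simp
  have "(\<Prod>d\<in>{d. d dvd n}. cyclo_complex d)
      = (\<Prod>d\<in>{d. d dvd n}. \<Prod>j\<in>{k. k < d \<and> coprime k d}. [:- cis (2 * pi * real j / real d), 1:])"
    by (simp add: cyclo_complex_def)
  also have "\<dots> = (\<Prod>(d,j)\<in>S. [:- cis (2 * pi * real j / real d), 1:])"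
    unfolding S_def by (rule prod.Sigma) (use fin in auto)
  also have "\<dots> = (\<Prod>k<n. [:- cis (2 * pi * real k / real n), 1:])"
  proof (rule prod.reindex_bij_witness[where i = "\<lambda>k. (n div gcd k n, k div gcd k n)"
        and j = "\<lambda>(d,j). j * (n div d)"])
    fix a assume "a \<in> S"
    then obtain d j where a: "a = (d,j)" "d dvd n" "j < d" "coprime j d" by (auto simp: S_def)
    obtain e where e: "n = d * e" using a(2) by blast
    have e0: "e > 0" "d > 0" using n e by auto
    have "gcd (e * j) (e * d) = e * gcd j d" by (rule gcd_mult_distrib_nat[symmetric])
    then have g: "gcd (j * e) n = e" using a(4) e by (simp add: mult.commute)
    show "(\<lambda>k. (n div gcd k n, k div gcd k n)) ((\<lambda>(d,j). j * (n div d)) a) = a"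
      using a e e0 g by simp
    show "(\<lambda>(d,j). j * (n div d)) a \<in> {..<n}"
      using a e e0 by simp
    have "real (j * e) / real n = real j / real d" using e e0 by (simp add: field_simps)
    then show "[:- cis (2 * pi * real ((\<lambda>(d,j). j * (n div d)) a) / real n), 1:]
        = (case a of (d, j) \<Rightarrow> [:- cis (2 * pi * real j / real d), 1:])"
      using a e e0 by (simp add: times_divide_eq_right[symmetric] del: times_divide_eq_right of_nat_mult)
  next
    fix k assume k: "k \<in> {..<n}"
    define g where "g = gcd k n"
    have g0: "g > 0" using n by (simp add: g_def)
    have gk: "g dvd k" and gn: "g dvd n" by (simp_all add: g_def)
    have ndiv: "n div (n div g) = g" using gn g0 n
      by (metis div_dvd_div div_self dvd_div_mult_self dvd_refl mult.commute nat_mult_div_cancel_disj neq0_conv nonzero_mult_div_cancel_left)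
    show "(\<lambda>(d,j). j * (n div d)) ((\<lambda>k. (n div gcd k n, k div gcd k n)) k) = k"
      using ndiv gk by (simp add: g_def[symmetric])
    have "k div g < n div g" using k gk gn g0
      by (metis dvd_div_mult_self lessThan_iff mult_less_cancel2)
    moreover have "coprime (k div g) (n div g)" using n g_def by (simp add: div_gcd_coprime)
    moreover have "n div g dvd n"
    proof -
      obtain c where c: "n = g * c" using gn by blast
      then have "n div g = c" using g0 by simp
      then show ?thesis using c by simp
    qed
    ultimately show "(\<lambda>k. (n div gcd k n, k div gcd k n)) k \<in> S"
      by (simp add: S_def g_def[symmetric])
  qed
  finally show ?thesis ..
qed



lemma cyclo_monic: "lead_coeff (cyclo_complex n) = 1"
  by (simp add: cyclo_complex_def lead_coeff_prod)

lemma cyclo_int: "n > 0 \<Longrightarrow> \<exists>p. ip p = cyclo_complex n"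
proof (induction n rule: less_induct)
  case (less n)
  define D where "D = {d. d dvd n \<and> d < n}"
  define P where "P d = (SOME p. ip p = cyclo_complex d)" for d
  have PD: "ip (P d) = cyclo_complex d" if "d \<in> D" for d
  proof -
    have "d > 0" "d < n" using that less.prems by (auto simp: D_def intro: Nat.gr0I)
    then have "\<exists>p. ip p = cyclo_complex d" using less.IH by blast
    then show ?thesis unfolding P_def by (rule someI_ex)
  qed
  define Q where "Q = (\<Prod>d\<in>D. P d)"
  have iQ: "ip Q = (\<Prod>d\<in>D. cyclo_complex d)" unfolding Q_def ip_prod
    by (rule prod.cong) (simp_all add: PD)
  have "of_int (lead_coeff Q) = (1::complex)"
    using iQ ip_lead[of Q] by (simp add: lead_coeff_prod cyclo_monic)
  then have lQ: "lead_coeff Q = 1" by simp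
  have fin: "finite D" using less.prems by (simp add: D_def)
  have "{d. d dvd n} = insert n D" by (auto simp: D_def dest: dvd_imp_le[OF _ less.prems])
  then have "(\<Prod>d\<in>{d. d dvd n}. cyclo_complex d) = cyclo_complex n * (\<Prod>d\<in>D. cyclo_complex d)"
    using fin by (simp add: D_def)
  then have "ip (monom 1 n - 1) = ip Q * cyclo_complex n"
    using xn_factor[OF less.prems] regroup[OF less.prems] iQ by (simp add: ip_diff ip_monom)
  then show ?case using monic_div[OF lQ] by metis
qed

lemma cyclo_dvd: assumes "n > 0" shows "cyclotomic n dvd (monom 1 n - 1)"
proof -
  obtain p where p: "ip p = cyclo_complex n" using cyclo_int[OF assms] by blast
  have c: "ip (cyclotomic n) = cyclo_complex n"
    unfolding cyclotomic_def by (rule theI[of _ p]) (use p ip_inj in auto)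
  have fin: "finite {d. d dvd n \<and> d < n}" using assms by simp
  have "{d. d dvd n} = insert n {d. d dvd n \<and> d < n}" by (auto dest: dvd_imp_le[OF _ assms])
  then have "(\<Prod>d\<in>{d. d dvd n}. cyclo_complex d) = cyclo_complex n * (\<Prod>d\<in>{d. d dvd n \<and> d < n}. cyclo_complex d)"
    using fin by simp
  then have e: "ip (monom 1 n - 1) = cyclo_complex n * (\<Prod>d\<in>{d. d dvd n \<and> d < n}. cyclo_complex d)"
    using xn_factor[OF assms] regroup[OF assms] by (simp add: ip_diff ip_monom)
  have "\<exists>s. (\<Prod>d\<in>{d. d dvd n \<and> d < n}. cyclo_complex d) = ip s"
    by (rule monic_div[of "cyclotomic n" "monom 1 n - 1"])
      (use c e ip_lead[of "cyclotomic n"] cyclo_monic[of n] in auto)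
  then obtain s where "(\<Prod>d\<in>{d. d dvd n \<and> d < n}. cyclo_complex d) = ip s" by blast
  then have "ip (monom 1 n - 1) = ip (cyclotomic n * s)" using e c by (simp add: ip_mult)
  then have "monom 1 n - 1 = cyclotomic n * s" by (rule ip_inj)
  then show ?thesis by simp
qed



definition qinv :: "int poly \<Rightarrow> bool" where
  "qinv f \<longleftrightarrow> (\<exists>u. f dvd monom 1 1 * u - 1)"

lemma qinv_cyclo: "n > 0 \<Longrightarrow> qinv (cyclotomic n)"
  unfolding qinv_def
proof (rule exI[of _ "monom 1 (n - 1)"])
  assume "n > 0"
  then have "monom 1 1 * monom 1 (n - 1) - 1 = (monom 1 n - 1 :: int poly)"
    by (simp add: mult_monom)
  then show "cyclotomic n dvd monom 1 1 * monom 1 (n - 1) - 1"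
    using cyclo_dvd[OF \<open>n > 0\<close>] by simp
qed

lemma qinv_mult: "qinv f \<Longrightarrow> qinv g \<Longrightarrow> qinv (f * g)"
  unfolding qinv_def
proof (elim exE)
  fix u v assume u: "f dvd monom 1 1 * u - 1" and v: "g dvd monom 1 1 * v - 1"
  define x :: "int poly" where "x = monom 1 1"
  have "f * g dvd (x * u - 1) * (x * v - 1)" using u v by (simp add: x_def mult_dvd_mono)
  moreover have "(x * u - 1) * (x * v - 1) = - (x * (u + v - x * u * v) - 1)"
    by (simp add: algebra_simps)
  ultimately show "\<exists>w. f * g dvd monom 1 1 * w - 1"
    by (metis dvd_minus_iff x_def)
qed

lemma qinv_star: "f \<in> Phi_star \<Longrightarrow> qinv f"
proof -
  assume "f \<in> Phi_star"
  then obtain M where M: "f = prod_mset (image_mset cyclotomic M)" "\<forall>n\<in>#M. 0 < n"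
    by (auto simp: Phi_star_def)
  have "qinv (prod_mset (image_mset cyclotomic M))" using M(2)
  proof (induction M)
    case empty then show ?case by (auto simp: qinv_def intro: exI[of _ 0])
  next
    case (add x M) then show ?case by (simp add: qinv_mult qinv_cyclo)
  qed
  then show ?thesis using M by simp
qed

lemma pow_dvd: fixes x u :: "'a::comm_ring_1"
  assumes "f dvd x * u - 1" shows "f dvd x ^ m * u ^ m - 1"
proof (induction m)
  case 0 then show ?case by simp
next
  case (Suc m)
  have "x ^ Suc m * u ^ Suc m - 1 = (x ^ m * u ^ m) * (x * u - 1) + (x ^ m * u ^ m - 1)"
    by (simp add: algebra_simps)
  moreover have "f dvd (x ^ m * u ^ m) * (x * u - 1) + (x ^ m * u ^ m - 1)"
    using Suc.IH assms by (intro dvd_add dvd_mult) 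
  ultimately show ?case by metis
qed

lemma qinv_pow: "qinv f \<Longrightarrow> \<exists>v. f dvd qpow m * v - 1"
  unfolding qinv_def
proof (elim exE)
  fix u assume "f dvd monom 1 1 * u - 1"
  then have "f dvd (monom 1 1) ^ m * u ^ m - 1" by (rule pow_dvd)
  then show "\<exists>v. f dvd qpow m * v - 1" by (auto simp: monom_power)
qed

lemma cancel: fixes f :: "'a::comm_ring_1"
  assumes "f dvd z * v - 1" "f dvd z * y" shows "f dvd y"
proof -
  have "y = v * (z * y) - y * (z * v - 1)" by (simp add: algebra_simps)
  then show ?thesis using assms by (metis dvd_diff dvd_mult)
qed

theorem proposition7p5:
  fixes a g :: "int poly" and k :: nat
  assumes "g \<in> Phi_star"
  shows "(\<exists>x\<in>habiro_elems. \<forall>f\<in>Phi_star. f dvd (qpow k * g * x f - a))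
     \<longleftrightarrow> (\<exists>b :: int poly. \<exists>m :: nat. qpow m * a = qpow k * g * b)"
proof
  assume "\<exists>x\<in>habiro_elems. \<forall>f\<in>Phi_star. f dvd (qpow k * g * x f - a)"
  then obtain x where x: "\<forall>f\<in>Phi_star. f dvd (qpow k * g * x f - a)" by blast
  obtain M where M: "g = prod_mset (image_mset cyclotomic M)" "\<forall>n\<in>#M. 0 < n"
    using assms by (auto simp: Phi_star_def)
  have "g * g = prod_mset (image_mset cyclotomic (M + M))" using M by simp
  moreover have "\<forall>n\<in>#M + M. 0 < n" using M by auto
  ultimately have "g * g \<in> Phi_star" unfolding Phi_star_def by blast
  then have "g * g dvd qpow k * g * x (g * g) - a" using x by blast
  then have "g dvd qpow k * g * x (g * g) - a" by (rule dvd_mult_left)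
  moreover have "g dvd qpow k * g * x (g * g)" by simp
  ultimately have "g dvd qpow k * g * x (g * g) - (qpow k * g * x (g * g) - a)"
    by (rule dvd_diff[rotated])
  then have "g dvd a" by simp
  then obtain c where "a = g * c" by blast
  then have "qpow k * a = qpow k * g * c" by (simp add: mult.assoc)
  then show "\<exists>b :: int poly. \<exists>m :: nat. qpow m * a = qpow k * g * b" by blast
next
  assume "\<exists>b :: int poly. \<exists>m :: nat. qpow m * a = qpow k * g * b"
  then obtain b m where bm: "qpow m * a = qpow k * g * b" by blast
  define V where "V f = (SOME v. f dvd qpow m * v - 1)" for f
  have V: "f dvd qpow m * V f - 1" if "f \<in> Phi_star" for f
    unfolding V_def by (rule someI_ex) (use qinv_pow[OF qinv_star[OF that]] in blast)
  define x where "x f = b * V f" for f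
  have "x \<in> habiro_elems" unfolding habiro_elems_def
  proof (intro CollectI ballI impI)
    fix f h assume f: "f \<in> Phi_star" and h: "h \<in> Phi_star" and fh: "f dvd h"
    have "f dvd qpow m * V h - 1" using V[OF h] fh by (rule dvd_trans[rotated])
    then have "f dvd (qpow m * V h - 1) - (qpow m * V f - 1)" using V[OF f] by (rule dvd_diff)
    then have "f dvd b * ((qpow m * V h - 1) - (qpow m * V f - 1))" by (rule dvd_mult)
    moreover have "b * ((qpow m * V h - 1) - (qpow m * V f - 1)) = qpow m * (x h - x f)"
      by (simp add: x_def algebra_simps)
    ultimately show "f dvd x h - x f" using cancel[OF V[OF f]] by metis
  qed
  moreover have "\<forall>f\<in>Phi_star. f dvd (qpow k * g * x f - a)"
  proof
    fix f assume f: "f \<in> Phi_star"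
    have "f dvd qpow k * g * b * (qpow m * V f - 1)" using V[OF f] by simp
    moreover have "qpow k * g * b * (qpow m * V f - 1) = qpow m * (qpow k * g * x f - a)"
      using bm by (simp add: x_def algebra_simps)
    ultimately show "f dvd (qpow k * g * x f - a)" using cancel[OF V[OF f]] by metis
  qed
  ultimately show "\<exists>x\<in>habiro_elems. \<forall>f\<in>Phi_star. f dvd (qpow k * g * x f - a)" by blast
qed


end
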